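(* Let $n,m,l\in\mathbb{N}_{>0}$, $\mathcal{M}=\{A_1,\dots,A_m\}\subset\mathbb{R}^{n\times n}$, and $\gamma^*>0$. Let $P\succ 0$ be an optimal solution of the problem $\mathrm{Opt}(\omega_N)$ (for some sample $\omega_N$ and some $\eta>0$), and suppose that there is a Borel set $\tilde{\mathbb{S}}\subset\mathbb{S}$ with $\sigma^{n-1}(\tilde{\mathbb{S}})\le\tilde\varepsilon$ such that $$(\mathbf{A_j}x)^TP\,\mathbf{A_j}x\le(\gamma^* )^{2l}x^TPx\quad\text{for all }x\in\mathbb{S}\setminus\tilde{\mathbb{S}}\text{ and all }\mathbf{j}\in\{1,\dots,m\}^l.$$ Then $$\rho(\mathcal{M})\le\frac{\gamma^*}{\sqrt[l]{\delta\!\left(\frac{\tilde\varepsilon\,\kappa(P)}{2}\right)}},\qquad \kappa(P)=\sqrt{\frac{\det(P)}{\lambda_{\min}(P)^n}}.$$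
   Context: $\mathbb{S},\mathbb{B}$: Euclidean unit sphere and closed unit ball in $\mathbb{R}^n$. Uniform spherical measure: $\sigma^{n-1}(X)=\lambda(\{tx:x\in X,t\in[0,1]\})/\lambda(\mathbb{B})$, $\lambda$ Lebesgue measure. For $\mathbf{j}=(j_1,\dots,j_l)$, $\mathbf{A_j}=A_{j_l}\cdots A_{j_1}$. Joint spectral radius: $\rho(\mathcal{M})=\lim_{k\to\infty}\max\{\|A_{i_1}\cdots A_{i_k}\|^{1/k}:A_{i_j}\in\mathcal{M}\}$. A sample $\omega_N$ is a finite subset $\{(x_i,\mathbf{j}_i)\}_{i=1}^N$ of $\mathbb{S}\times\{1,\dots,m\}^l$; $\gamma^*(\omega_N)$ is the optimal value of $\min\gamma$ s.t. $(\mathbf{A_j}x)^TP\mathbf{A_j}x\le\gamma^{2l}x^TPx$ for all $(x,\mathbf{j})\in\omega_N$, $P\succ0$, $\gamma\ge0$. For $\eta>0$, $\mathrm{Opt}(\omega_N)$ is: minimize $\lambda_{\max}(P)$ over symmetric $P$ subject to $(\mathbf{A_j}x)^TP\mathbf{A_j}x\le((1+\eta)\gamma^*(\omega_N))^{2l}x^TPx$ for all $(x,\mathbf{j})\in\omega_N$ and $P\succeq I$. For $X\subset\mathbb{S}$, $\Delta(X)=\sup\{r\in[0,1]: r\mathbb{B}\subset\mathrm{conv}(\mathbb{S}\setminus X)\}$ (sup of empty set $=0$), and for $e\ge0$, $\delta(e)=\inf\{\Delta(X): X\subset\mathbb{S}\text{ Borel}, \sigma^{n-1}(X)\le e\}$;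 for $e\le 1/2$ this equals $\sqrt{1-I^{-1}(2e;\frac{n-1}{2},\frac12)}$ with $I$ the regularized incomplete beta function. Convention: $\gamma^*/0=+\infty$. *)

theory Defs
  imports "HOL-Analysis.Analysis"
begin

text \<open>Words j = (j_1,...,j_l) over the alphabet {1..m}.\<close>
definition words :: "nat \<Rightarrow> nat \<Rightarrow> nat list set" where
  "words m l = {js. length js = l \<and> set js \<subseteq> {1..m}}"

text \<open>A_j = A_{j_l} ... A_{j_1}\<close>
definition word_prod :: "(nat \<Rightarrow> real^'n^'n) \<Rightarrow> nat list \<Rightarrow> real^'n^'n" where
  "word_prod A js = foldl (\<lambda>M i. A i ** M) (mat 1) js"

text \<open>Joint spectral radius of {A_1,...,A_m} (induced Euclidean operator norm).\<close>
definition jsr :: "(nat \<Rightarrow> real^'n^'n) \<Rightarrow> nat \<Rightarrow> real" where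
  "jsr A m = lim (\<lambda>k. Max ((\<lambda>js. root k (onorm (\<lambda>x. word_prod A js *v x))) ` words m k))"

definition quadf :: "real^'n^'n \<Rightarrow> real^'n \<Rightarrow> real" where
  "quadf P x = x \<bullet> (P *v x)"

definition posdef :: "real^'n^'n \<Rightarrow> bool" where
  "posdef P \<longleftrightarrow> transpose P = P \<and> (\<forall>x. x \<noteq> 0 \<longrightarrow> quadf P x > 0)"

definition eigenvalues :: "real^'n^'n \<Rightarrow> real set" where
  "eigenvalues P = {\<mu>. \<exists>v. v \<noteq> 0 \<and> P *v v = \<mu> *\<^sub>R v}"

definition lambda_max :: "real^'n^'n \<Rightarrow> real" where
  "lambda_max P = Max (eigenvalues P)"

definition lambda_min :: "real^'n^'n \<Rightarrow> real" where
  "lambda_min P = Min (eigenvalues P)"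

definition kappa :: "real^'n^'n \<Rightarrow> real" where
  "kappa P = sqrt (det P / lambda_min P ^ CARD('n))"

text \<open>gamma^*(omega_N): optimal value of the sampled LMI problem.\<close>
definition gamma_star :: "(nat \<Rightarrow> real^'n^'n) \<Rightarrow> nat \<Rightarrow> ((real^'n) \<times> nat list) set \<Rightarrow> real" where
  "gamma_star A l \<omega> = Inf {\<gamma>. \<gamma> \<ge> 0 \<and> (\<exists>P. posdef P \<and>
      (\<forall>(x,js)\<in>\<omega>. quadf P (word_prod A js *v x) \<le> \<gamma> ^ (2*l) * quadf P x))}"

definition opt_feasible :: "(nat \<Rightarrow> real^'n^'n) \<Rightarrow> nat \<Rightarrow> real \<Rightarrow> ((real^'n) \<times> nat list) set \<Rightarrow> real^'n^'n \<Rightarrow> bool" where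
  "opt_feasible A l \<eta> \<omega> P \<longleftrightarrow> transpose P = P \<and> (\<forall>x. x \<bullet> x \<le> quadf P x) \<and>
     (\<forall>(x,js)\<in>\<omega>. quadf P (word_prod A js *v x) \<le> ((1 + \<eta>) * gamma_star A l \<omega>) ^ (2*l) * quadf P x)"

text \<open>P is an optimal solution of Opt(omega_N): minimise lambda_max over the feasible set.\<close>
definition opt_solution :: "(nat \<Rightarrow> real^'n^'n) \<Rightarrow> nat \<Rightarrow> real \<Rightarrow> ((real^'n) \<times> nat list) set \<Rightarrow> real^'n^'n \<Rightarrow> bool" where
  "opt_solution A l \<eta> \<omega> P \<longleftrightarrow> opt_feasible A l \<eta> \<omega> P \<and>
     (\<forall>Q. opt_feasible A l \<eta> \<omega> Q \<longrightarrow> lambda_max P \<le> lambda_max Q)"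

text \<open>Uniform spherical measure via the cone over X.\<close>
definition sph_measure :: "(real^'n) set \<Rightarrow> real" where
  "sph_measure X = measure lebesgue {t *\<^sub>R x | x t. x \<in> X \<and> t \<in> {0..1}} / measure lebesgue (cball (0::real^'n) 1)"

definition Delta :: "(real^'n) set \<Rightarrow> real" where
  "Delta X = (let R = {r \<in> {0..1}. cball (0::real^'n) r \<subseteq> convex hull (sphere 0 1 - X)}
              in if R = {} then 0 else Sup R)"

definition delta_fun :: "real \<Rightarrow> 'n::finite itself \<Rightarrow> real" where
  "delta_fun e _ = Inf {Delta X | X :: (real^'n) set. X \<in> sets borel \<and> X \<subseteq> sphere 0 1 \<and> sph_measure X \<le> e}"

end

theory Submission
  imports Defs
begin


lemma det_shear_gen:
  fixes m n :: "'n::finite"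
  assumes "m \<noteq> n"
  shows "det (matrix (\<lambda>v::real^'n. \<chi> i. if i = m then v $ m + v $ n else v $ i)) = 1"
proof -
  have eq: "matrix (\<lambda>v::real^'n. \<chi> i. if i = m then v $ m + v $ n else v $ i)
     = (\<chi> k. if k = m then row m (mat 1) + 1 *s row n (mat 1) else row k (mat 1 :: real^'n^'n))"
    by (auto simp: matrix_def vec_eq_iff row_def mat_def axis_def)
  show ?thesis unfolding eq using det_row_operation[OF assms, of "mat 1 :: real^'n^'n" 1] by simp
qed

proposition
 fixes f :: "real^'n::finite \<Rightarrow> real^'n"
  assumes "linear f" "S \<in> lmeasurable"
  shows measurable_linear_image_gen: "(f ` S) \<in> lmeasurable"
    and measure_linear_image_gen: "measure lebesgue (f ` S) = \<bar>det (matrix f)\<bar> * measure lebesgue S" (is "?Q f S")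
proof -
  have "\<forall>S \<in> lmeasurable. (f ` S) \<in> lmeasurable \<and> ?Q f S"
  proof (rule induct_linear_elementary [OF \<open>linear f\<close>]; intro ballI)
    fix f g and S :: "(real,'n) vec set"
    assume "linear f" and "linear g"
      and f [rule_format]: "\<forall>S \<in> lmeasurable. f ` S \<in> lmeasurable \<and> ?Q f S"
      and g [rule_format]: "\<forall>S \<in> lmeasurable. g ` S \<in> lmeasurable \<and> ?Q g S"
      and S: "S \<in> lmeasurable"
    then have gS: "g ` S \<in> lmeasurable"
      by blast
    show "(f \<circ> g) ` S \<in> lmeasurable \<and> ?Q (f \<circ> g) S"
      using f [OF gS] g [OF S] matrix_compose [OF \<open>linear g\<close> \<open>linear f\<close>]
      by (simp add: o_def image_comp abs_mult det_mul)
  next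
    fix f :: "real^'n::_ \<Rightarrow> real^'n::_" and i and S :: "(real^'n::_) set"
    assume "linear f" and 0: "\<And>x. f x $ i = 0" and "S \<in> lmeasurable"
    then have "\<not> inj f"
      by (metis (full_types) linear_injective_imp_surjective one_neq_zero surjE vec_component)
    have detf: "det (matrix f) = 0"
      using \<open>\<not> inj f\<close> det_nz_iff_inj[OF \<open>linear f\<close>] by blast
    show "f ` S \<in> lmeasurable \<and> ?Q f S"
    proof
      show "f ` S \<in> lmeasurable"
        using lmeasurable_iff_indicator_has_integral \<open>linear f\<close> \<open>\<not> inj f\<close> negligible_UNIV negligible_linear_singular_image by blast
      have "measure lebesgue (f ` S) = 0"
        by (meson \<open>\<not> inj f\<close> \<open>linear f\<close> negligible_imp_measure0 negligible_linear_singular_image)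
      also have "\<dots> = \<bar>det (matrix f)\<bar> * measure lebesgue S"
        by (simp add: detf)
      finally show "?Q f S" .
    qed
  next
    fix c and S :: "(real^'n::_) set"
    assume "S \<in> lmeasurable"
    show "(\<lambda>a. \<chi> i. c i * a $ i) ` S \<in> lmeasurable \<and> ?Q (\<lambda>a. \<chi> i. c i * a $ i) S"
    proof
      show "(\<lambda>a. \<chi> i. c i * a $ i) ` S \<in> lmeasurable"
        by (simp add: \<open>S \<in> lmeasurable\<close> measurable_stretch)
      show "?Q (\<lambda>a. \<chi> i. c i * a $ i) S"
        by (simp add: measure_stretch [OF \<open>S \<in> lmeasurable\<close>, of c] axis_def matrix_def det_diagonal)
    qed
  next
    fix m :: "'n" and n :: "'n" and S :: "(real, 'n) vec set"
    assume "m \<noteq> n" and "S \<in> lmeasurable"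
    let ?h = "\<lambda>v::(real, 'n) vec. \<chi> i. v $ Transposition.transpose m n i"
    have lin: "linear ?h"
      by (rule linearI) (simp_all add: plus_vec_def scaleR_vec_def)
    have meq: "measure lebesgue ((\<lambda>v::(real, 'n) vec. \<chi> i. v $ Transposition.transpose m n i) ` cbox a b)
             = measure lebesgue (cbox a b)" for a b
    proof (cases "cbox a b = {}")
      case True then show ?thesis
        by simp
    next
      case False
      then have him: "?h ` (cbox a b) \<noteq> {}"
        by blast
      have eq: "?h ` (cbox a b) = cbox (?h a) (?h b)"
        by (auto simp: image_iff lambda_swap_Galois mem_box_cart) (metis transpose_involutory)+
      show ?thesis
        using him prod.permute [OF permutes_swap_id, where S=UNIV and g="\<lambda>i. (b - a)$i", symmetric]
        by (simp add: eq content_cbox_cart False)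
    qed
    have "(\<chi> i j. if Transposition.transpose m n i = j then 1 else 0) = (\<chi> i j. if j = Transposition.transpose m n i then 1 else (0::real))"
      by (auto intro!: Cart_lambda_cong)
    then have "matrix ?h = transpose(\<chi> i j. mat 1 $ i $ Transposition.transpose m n j)"
      by (auto simp: matrix_eq transpose_def axis_def mat_def matrix_def)
    then have 1: "\<bar>det (matrix ?h)\<bar> = 1"
      by (simp add: det_permute_columns permutes_swap_id sign_swap_id abs_mult)
    show "?h ` S \<in> lmeasurable \<and> ?Q ?h S"
      using measure_linear_sufficient [OF lin \<open>S \<in> lmeasurable\<close>] meq 1 by force
  next
    fix m n :: "'n" and S :: "(real, 'n) vec set"
    assume "m \<noteq> n" and "S \<in> lmeasurable"
    let ?h = "\<lambda>v::(real, 'n) vec. \<chi> i. if i = m then v $ m + v $ n else v $ i"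
    have lin: "linear ?h"
      by (rule linearI) (auto simp: algebra_simps plus_vec_def scaleR_vec_def vec_eq_iff)
    have 1: "det(matrix ?h) = 1"
      using det_shear_gen[OF \<open>m \<noteq> n\<close>] by simp
    have meq: "measure lebesgue (?h ` (cbox a b)) = measure lebesgue (cbox a b)" for a b
    proof (cases "cbox a b = {}")
      case True then show ?thesis by simp
    next
      case False
      then have ne: "(+) (\<chi> i. if i = n then - a $ n else 0) ` cbox a b \<noteq> {}"
        by auto
      let ?v = "\<chi> i. if i = n then - a $ n else 0"
      have "?h ` cbox a b
            = (+) (\<chi> i. if i = m \<or> i = n then a $ n else 0) ` ?h ` (+) ?v ` (cbox a b)"
        using \<open>m \<noteq> n\<close> unfolding image_comp o_def by (force simp: vec_eq_iff)
      then have "measure lebesgue (?h ` (cbox a b))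
               = measure lebesgue ((\<lambda>v. \<chi> i. if i = m then v $ m + v $ n else v $ i) `
                                   (+) ?v ` cbox a b)"
        by (rule ssubst) (rule measure_translation)
      also have "\<dots> = measure lebesgue ((\<lambda>v. \<chi> i. if i = m then v $ m + v $ n else v $ i) ` cbox (?v +a) (?v + b))"
        by (metis (no_types, lifting) cbox_translation)
      also have "\<dots> = measure lebesgue ((+) ?v ` cbox a b)"
        apply (subst measure_shear_interval)
        using \<open>m \<noteq> n\<close> ne apply auto
        apply (simp add: cbox_translation)
        by (metis cbox_borel cbox_translation measure_completion sets_lborel)
      also have "\<dots> = measure lebesgue (cbox a b)"
        by (rule measure_translation)
        finally show ?thesis .
      qed
    show "?h ` S \<in> lmeasurable \<and> ?Q ?h S"
      using measure_linear_sufficient [OF lin \<open>S \<in> lmeasurable\<close>] meq 1 by force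
  qed
  with assms show "(f ` S) \<in> lmeasurable" "?Q f S"
    by metis+
qed



lemma sym_inner:
  fixes P :: "real^'n^'n"
  assumes "transpose P = P"
  shows "(P *v x) \<bullet> y = x \<bullet> (P *v y)"
proof -
  have "P *v x = x v* transpose P" by (simp add: vector_transpose_matrix)
  then show ?thesis using assms by (simp add: dot_lmul_matrix)
qed

lemma spectral_ext:
  fixes P :: "real^'n^'n"
  assumes sym: "transpose P = P"
  shows "k \<le> DIM(real^'n) \<Longrightarrow> \<exists>B. card B = k \<and> finite B \<and> pairwise orthogonal B \<and>
           (\<forall>b\<in>B. norm b = 1 \<and> (\<exists>\<mu>. P *v b = \<mu> *\<^sub>R b))"
proof (induction k)
  case 0
  show ?case by (rule exI[of _ "{}"]) auto
next
  case (Suc k)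
  then obtain B where B: "card B = k" "finite B" "pairwise orthogonal B"
     "\<And>b. b\<in>B \<Longrightarrow> norm b = 1" "\<And>b. b \<in> B \<Longrightarrow> \<exists>\<mu>. P *v b = \<mu> *\<^sub>R b" by auto
  have bb: "b \<bullet> b = 1" if "b \<in> B" for b using B(4)[OF that] by (simp add: norm_eq_1)
  have orth: "b \<bullet> c = 0" if "b \<in> B" "c \<in> B" "b \<noteq> c" for b c
    using B(3) that unfolding pairwise_def orthogonal_def by blast
  have "0 \<notin> B" using B(4) by force
  then have indep: "independent B" using B(3) pairwise_orthogonal_independent by blast
  have "dim B = k" using dim_eq_card_independent[OF indep] B(1) by simp
  with Suc.prems have "span B \<noteq> UNIV" using dim_eq_full[of B] by auto
  then obtain x where x: "x \<notin> span B" by auto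
  define y0 where "y0 = x - (\<Sum>b\<in>B. (x \<bullet> b) *\<^sub>R b)"
  have "(\<Sum>b\<in>B. (x \<bullet> b) *\<^sub>R b) \<in> span B"
    by (intro span_sum span_mul span_base) 
  then have y0nz: "y0 \<noteq> 0" using x unfolding y0_def by auto
  have y0orth: "c \<bullet> y0 = 0" if "c \<in> B" for c
  proof -
    have "c \<bullet> (\<Sum>b\<in>B. (x \<bullet> b) *\<^sub>R b) = (\<Sum>b\<in>B. (x \<bullet> b) * (c \<bullet> b))"
      by (simp add: inner_sum_right)
    also have "\<dots> = (x \<bullet> c) * (c \<bullet> c) + (\<Sum>b\<in>B-{c}. (x \<bullet> b) * (c \<bullet> b))"
      using B(2) that by (simp add: sum.remove)
    also have "(\<Sum>b\<in>B-{c}. (x \<bullet> b) * (c \<bullet> b)) = 0" using orth[OF that] by (intro sum.neutral) auto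
    then have "(x \<bullet> c) * (c \<bullet> c) + (\<Sum>b\<in>B-{c}. (x \<bullet> b) * (c \<bullet> b)) = x \<bullet> c" using bb[OF that] by simp
    finally show ?thesis unfolding y0_def by (simp add: inner_diff_right inner_commute)
  qed
  define V where "V = {y. \<forall>b\<in>B. b \<bullet> y = 0}"
  have V_add: "y + z \<in> V" if "y \<in> V" "z \<in> V" for y z
    using that unfolding V_def by (simp add: inner_add_right)
  have V_scale: "c *\<^sub>R y \<in> V" if "y \<in> V" for y c
    using that unfolding V_def by simp
  have V_P: "P *v y \<in> V" if "y \<in> V" for y
  proof -
    { fix b assume b: "b \<in> B"
      then obtain \<mu> where "P *v b = \<mu> *\<^sub>R b" using B(5) by blast
      then have "b \<bullet> (P *v y) = \<mu> * (b \<bullet> y)" using sym_inner[OF sym, of b y] by simp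
      then have "b \<bullet> (P *v y) = 0" using that b unfolding V_def by simp }
    then show ?thesis unfolding V_def by auto
  qed
  have "closed V"
  proof -
    have "V = (\<Inter>b\<in>B. {y. b \<bullet> y = 0})" unfolding V_def by auto
    then show ?thesis by (auto intro!: closed_INT closed_hyperplane)
  qed
  then have cpt: "compact (V \<inter> sphere 0 1)" by (simp add: closed_Int_compact)
  have y0V: "y0 \<in> V" using y0orth unfolding V_def by auto
  have "(1 / norm y0) *\<^sub>R y0 \<in> V \<inter> sphere 0 1" using y0V y0nz V_scale by auto
  then have ne: "V \<inter> sphere 0 1 \<noteq> {}" by blast
  have cont: "continuous_on (V \<inter> sphere 0 1) (\<lambda>y. y \<bullet> (P *v y))"
    by (intro continuous_intros linear_continuous_on matrix_vector_mul_linear)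
  obtain v where v: "v \<in> V \<inter> sphere 0 1" and vmin: "\<And>y. y \<in> V \<inter> sphere 0 1 \<Longrightarrow> v \<bullet> (P *v v) \<le> y \<bullet> (P *v y)"
    using continuous_attains_inf[OF cpt ne cont] by blast
  define \<mu>0 where "\<mu>0 = v \<bullet> (P *v v)"
  have hmin: "\<mu>0 * (y \<bullet> y) \<le> y \<bullet> (P *v y)" if "y \<in> V" for y
  proof (cases "y = 0")
    case True then show ?thesis by simp
  next
    case False
    let ?z = "(1 / norm y) *\<^sub>R y"
    have "?z \<in> V \<inter> sphere 0 1" using that False V_scale by auto
    then have "\<mu>0 \<le> ?z \<bullet> (P *v ?z)" using vmin unfolding \<mu>0_def by blast
    also have "?z \<bullet> (P *v ?z) = (y \<bullet> (P *v y)) / (norm y)^2"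
      by (simp add: matrix_vector_mult_scaleR power2_eq_square)
    finally have "\<mu>0 * (norm y)^2 \<le> y \<bullet> (P *v y)" using False by (simp add: field_simps)
    then show ?thesis by (simp add: power2_norm_eq_inner)
  qed
  define u where "u = P *v v - \<mu>0 *\<^sub>R v"
  have vV: "v \<in> V" and vn: "v \<bullet> v = 1" using v by (auto simp: norm_eq_1)
  have uV: "u \<in> V" unfolding u_def using V_add[OF V_P[OF vV] V_scale[OF vV, of "-\<mu>0"]] by simp
  have key: "0 \<le> 2 * t * (u \<bullet> u) + t^2 * (u \<bullet> (P *v u) - \<mu>0 * (u \<bullet> u))" for t
  proof -
    have "v + t *\<^sub>R u \<in> V" using V_add[OF vV V_scale[OF uV]] .
    from hmin[OF this]
    have h: "\<mu>0 * ((v + t *\<^sub>R u) \<bullet> (v + t *\<^sub>R u)) \<le> (v + t *\<^sub>R u) \<bullet> (P *v (v + t *\<^sub>R u))" .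
    have e1: "(v + t *\<^sub>R u) \<bullet> (v + t *\<^sub>R u) = 1 + 2 * t * (v \<bullet> u) + t^2 * (u \<bullet> u)"
      using vn by (simp add: inner_add_left inner_add_right inner_commute power2_eq_square algebra_simps)
    have s: "v \<bullet> (P *v u) = u \<bullet> (P *v v)" using sym_inner[OF sym, of v u] by (simp add: inner_commute)
    have Pv: "P *v v = u + \<mu>0 *\<^sub>R v" unfolding u_def by simp
    have e2a: "(v + t *\<^sub>R u) \<bullet> (P *v (v + t *\<^sub>R u)) = v \<bullet> (P *v v) + t * (v \<bullet> (P *v u)) + t * (u \<bullet> (P *v v)) + t^2 * (u \<bullet> (P *v u))"
      by (simp add: matrix_vector_right_distrib matrix_vector_mult_scaleR inner_add_left inner_add_right
          power2_eq_square algebra_simps)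
    have uPv: "u \<bullet> (P *v v) = u \<bullet> u + \<mu>0 * (u \<bullet> v)" unfolding Pv by (simp add: inner_add_right)
    have e2: "(v + t *\<^sub>R u) \<bullet> (P *v (v + t *\<^sub>R u)) = \<mu>0 + 2 * t * (u \<bullet> u + \<mu>0 * (u \<bullet> v)) + t^2 * (u \<bullet> (P *v u))"
      unfolding e2a s uPv \<mu>0_def[symmetric] by (simp add: algebra_simps)
    show ?thesis using h unfolding e1 e2 by (simp add: inner_commute algebra_simps)
  qed
  have u0: "u = 0"
  proof (rule ccontr)
    assume "u \<noteq> 0"
    then have a: "u \<bullet> u > 0" by simp
    define c where "c = u \<bullet> (P *v u) - \<mu>0 * (u \<bullet> u)"
    have c: "c \<ge> 0" using hmin[OF uV] unfolding c_def by simp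
    define a where "a = u \<bullet> u"
    have k: "0 \<le> 2 * t * a + t^2 * c" for t using key[of t] unfolding a_def c_def by simp
    define t where "t = -a/(c+1)"
    have ap: "a > 0" using a unfolding a_def .
    have tneg: "t < 0" unfolding t_def using ap c by (simp add: divide_neg_pos)
    have "c/(c+1) \<le> 1" using c by simp
    then have "a * (c/(c+1)) \<le> a" using ap mult_left_le[of "c/(c+1)" a] by linarith
    then have tc: "t * c \<ge> -a" unfolding t_def by (simp add: field_simps)
    have "t * (2*a + t*c) < 0" using tneg tc ap by (intro mult_neg_pos) auto
    moreover have "t * (2*a + t*c) = 2 * t * a + t^2 * c" by (simp add: algebra_simps power2_eq_square)
    ultimately show False using k[of t] by simp
  qed
  have vnotin: "v \<notin> B" using vV vn unfolding V_def by auto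
  show ?case
  proof (intro exI[of _ "insert v B"] conjI)
    show "card (insert v B) = Suc k" using vnotin B by simp
    show "finite (insert v B)" using B by simp
    show "pairwise orthogonal (insert v B)"
      using B(3) vV unfolding V_def by (auto intro!: pairwise_orthogonal_insert simp: orthogonal_def inner_commute)
    show "\<forall>b\<in>insert v B. norm b = 1 \<and> (\<exists>\<mu>. P *v b = \<mu> *\<^sub>R b)"
      using B(4,5) v u0 unfolding u_def by auto
  qed
qed



locale onb =
  fixes B :: "(real^'n) set"
  assumes fin: "finite B" and unit: "\<And>b. b \<in> B \<Longrightarrow> b \<bullet> b = 1"
    and orth: "\<And>b c. b \<in> B \<Longrightarrow> c \<in> B \<Longrightarrow> b \<noteq> c \<Longrightarrow> b \<bullet> c = 0"
    and spn: "span B = UNIV"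
begin

lemma coef: "c \<in> B \<Longrightarrow> c \<bullet> (\<Sum>b\<in>B. f b *\<^sub>R b) = f c"
proof -
  assume c: "c \<in> B"
  have "c \<bullet> (\<Sum>b\<in>B. f b *\<^sub>R b) = (\<Sum>b\<in>B. f b * (c \<bullet> b))" by (simp add: inner_sum_right)
  also have "\<dots> = f c * (c \<bullet> c) + (\<Sum>b\<in>B-{c}. f b * (c \<bullet> b))" using fin c by (simp add: sum.remove)
  also have "(\<Sum>b\<in>B-{c}. f b * (c \<bullet> b)) = 0" using orth[OF c] by (intro sum.neutral) auto
  finally show ?thesis using unit[OF c] by simp
qed

lemma coef': "c \<in> B \<Longrightarrow> (\<Sum>b\<in>B. f b *\<^sub>R b) \<bullet> c = f c"
  using coef by (simp add: inner_commute)

lemma expand: "x = (\<Sum>b\<in>B. (x \<bullet> b) *\<^sub>R b)"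
proof -
  define y where "y = x - (\<Sum>b\<in>B. (x \<bullet> b) *\<^sub>R b)"
  have "orthogonal y c" if "c \<in> B" for c
    unfolding y_def orthogonal_def using coef'[OF that, of "\<lambda>b. x \<bullet> b"] that
    by (simp add: inner_diff_left inner_diff_right inner_commute)
  then have "orthogonal y y" using spn by (intro orthogonal_to_span[of y B]) auto
  then have "y = 0" by (simp add: orthogonal_def)
  then show ?thesis unfolding y_def by simp
qed

lemma eq_coefI: "(\<And>b. b \<in> B \<Longrightarrow> x \<bullet> b = y \<bullet> b) \<Longrightarrow> x = y"
  by (metis (no_types, lifting) expand sum.cong)

lemma inner_expand: "x \<bullet> y = (\<Sum>b\<in>B. (x \<bullet> b) * (y \<bullet> b))"
proof -
  have "x \<bullet> y = x \<bullet> (\<Sum>b\<in>B. (y \<bullet> b) *\<^sub>R b)" using expand[of y] by simp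
  also have "\<dots> = (\<Sum>b\<in>B. (x \<bullet> b) * (y \<bullet> b))" by (simp add: inner_sum_right mult.commute)
  finally show ?thesis .
qed

end

lemma sqrt_decomp:
  fixes P :: "real^'n^'n"
  assumes pd: "posdef P"
  shows "\<exists>T Ti. linear T \<and> linear Ti \<and> (\<forall>x. T (Ti x) = x) \<and> (\<forall>x. Ti (T x) = x)
     \<and> (\<forall>x. (norm (T x))^2 = quadf P x) \<and> (\<forall>x. lambda_min P * (norm x)^2 \<le> quadf P x)
     \<and> lambda_min P > 0 \<and> det P = (det (matrix T))^2"
proof -
  have sym: "transpose P = P" using pd unfolding posdef_def by simp
  obtain B where B: "card B = DIM(real^'n)" "finite B" "pairwise orthogonal B"
     "\<And>b. b\<in>B \<Longrightarrow> norm b = 1" "\<And>b. b \<in> B \<Longrightarrow> \<exists>\<mu>. P *v b = \<mu> *\<^sub>R b"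
    using spectral_ext[OF sym order_refl] by blast
  have "0 \<notin> B" using B(4) by force
  then have indep: "independent B" using B(3) pairwise_orthogonal_independent by blast
  have "dim B = DIM(real^'n)" using dim_eq_card_independent[OF indep] B(1) by simp
  then have spn: "span B = UNIV" using dim_eq_full by blast
  interpret onb B
  proof
    show "finite B" by fact
    show "b \<bullet> b = 1" if "b \<in> B" for b using B(4)[OF that] by (simp add: norm_eq_1)
    show "b \<bullet> c = 0" if "b \<in> B" "c \<in> B" "b \<noteq> c" for b c
      using B(3) that unfolding pairwise_def orthogonal_def by blast
    show "span B = UNIV" by fact
  qed
  obtain \<mu> where mu: "\<And>b. b \<in> B \<Longrightarrow> P *v b = \<mu> b *\<^sub>R b" using B(5) by metis
  have mupos: "\<mu> b > 0" if "b \<in> B" for b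
  proof -
    have "b \<noteq> 0" using B(4)[OF that] by auto
    then have "quadf P b > 0" using pd unfolding posdef_def by blast
    then show ?thesis unfolding quadf_def mu[OF that] using unit[OF that] by simp
  qed
  have Pexp: "P *v x = (\<Sum>b\<in>B. (\<mu> b * (x \<bullet> b)) *\<^sub>R b)" for x
  proof -
    have "P *v x = P *v (\<Sum>b\<in>B. (x \<bullet> b) *\<^sub>R b)" using expand[of x] by simp
    also have "\<dots> = (\<Sum>b\<in>B. (x \<bullet> b) *\<^sub>R (P *v b))" by (simp add: vec.sum matrix_vector_mult_scaleR)
    also have "\<dots> = (\<Sum>b\<in>B. (\<mu> b * (x \<bullet> b)) *\<^sub>R b)" by (intro sum.cong) (auto simp: mu)
    finally show ?thesis .
  qed
  have quad: "quadf P x = (\<Sum>b\<in>B. \<mu> b * (x \<bullet> b)^2)" for x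
    unfolding quadf_def Pexp by (simp add: inner_sum_right power2_eq_square algebra_simps)
  define T where "T x = (\<Sum>b\<in>B. (sqrt (\<mu> b) * (x \<bullet> b)) *\<^sub>R b)" for x
  define Ti where "Ti x = (\<Sum>b\<in>B. ((x \<bullet> b) / sqrt (\<mu> b)) *\<^sub>R b)" for x
  have linT: "linear T"
    by (rule linearI) (simp_all add: T_def inner_add_left algebra_simps sum.distrib scaleR_sum_right)
  have linTi: "linear Ti"
    by (rule linearI) (simp_all add: Ti_def inner_add_left algebra_simps sum.distrib scaleR_sum_right add_divide_distrib)
  have cT: "T x \<bullet> c = sqrt (\<mu> c) * (x \<bullet> c)" if "c \<in> B" for x c unfolding T_def using coef'[OF that] .
  have cTi: "Ti x \<bullet> c = (x \<bullet> c) / sqrt (\<mu> c)" if "c \<in> B" for x c unfolding Ti_def using coef'[OF that] .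
  have TTi: "T (Ti x) = x" for x
  proof (rule eq_coefI)
    fix c assume c: "c \<in> B"
    have "sqrt (\<mu> c) > 0" using mupos[OF c] by simp
    then show "T (Ti x) \<bullet> c = x \<bullet> c" by (simp add: cT[OF c] cTi[OF c])
  qed
  have TiT: "Ti (T x) = x" for x
  proof (rule eq_coefI)
    fix c assume c: "c \<in> B"
    have "sqrt (\<mu> c) > 0" using mupos[OF c] by simp
    then show "Ti (T x) \<bullet> c = x \<bullet> c" by (simp add: cT[OF c] cTi[OF c])
  qed
  have TT: "T (T x) = P *v x" for x
  proof (rule eq_coefI)
    fix c assume c: "c \<in> B"
    show "T (T x) \<bullet> c = (P *v x) \<bullet> c"
      unfolding Pexp coef'[OF c] cT[OF c] using mupos[OF c] by (simp add: algebra_simps)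
  qed
  have nT: "(norm (T x))^2 = quadf P x" for x
  proof -
    have "(norm (T x))^2 = T x \<bullet> T x" by (simp add: power2_norm_eq_inner)
    also have "\<dots> = (\<Sum>b\<in>B. (T x \<bullet> b) * (T x \<bullet> b))" by (rule inner_expand)
    also have "\<dots> = (\<Sum>b\<in>B. \<mu> b * (x \<bullet> b)^2)"
    proof (intro sum.cong refl)
      fix b assume b: "b \<in> B"
      have "sqrt (\<mu> b) * sqrt (\<mu> b) = \<mu> b" using mupos[OF b] by simp
      then show "(T x \<bullet> b) * (T x \<bullet> b) = \<mu> b * (x \<bullet> b)^2"
        unfolding cT[OF b] by (simp add: power2_eq_square algebra_simps)
    qed
    finally show ?thesis using quad by simp
  qed
  have eig: "eigenvalues P = \<mu> ` B"
  proof
    show "\<mu> ` B \<subseteq> eigenvalues P"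
    proof
      fix l assume "l \<in> \<mu> ` B"
      then obtain b where b: "b \<in> B" "l = \<mu> b" by blast
      have "b \<noteq> 0" using B(4)[OF b(1)] by auto
      then show "l \<in> eigenvalues P" unfolding eigenvalues_def using mu[OF b(1)] b(2) by blast
    qed
    show "eigenvalues P \<subseteq> \<mu> ` B"
    proof
      fix l assume "l \<in> eigenvalues P"
      then obtain v where v: "v \<noteq> 0" "P *v v = l *\<^sub>R v" unfolding eigenvalues_def by blast
      have "\<exists>b\<in>B. v \<bullet> b \<noteq> 0"
      proof (rule ccontr)
        assume "\<not> ?thesis"
        then have "v = 0" using eq_coefI[of v 0] by auto
        then show False using v by simp
      qed
      then obtain b where b: "b \<in> B" "v \<bullet> b \<noteq> 0" by blast
      have "(P *v v) \<bullet> b = \<mu> b * (v \<bullet> b)" unfolding Pexp coef'[OF b(1)] ..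
      then have "l * (v \<bullet> b) = \<mu> b * (v \<bullet> b)" using v by simp
      then have "l = \<mu> b" using b by simp
      then show "l \<in> \<mu> ` B" using b by blast
    qed
  qed
  have Bne: "B \<noteq> {}" using B(1) by auto
  have lmin: "lambda_min P = Min (\<mu> ` B)" unfolding lambda_min_def eig ..
  have lpos: "lambda_min P > 0" unfolding lmin using Bne B(2) mupos by (subst Min_gr_iff) auto
  have lle: "lambda_min P \<le> \<mu> b" if "b \<in> B" for b unfolding lmin using B(2) that by simp
  have lowb: "lambda_min P * (norm x)^2 \<le> quadf P x" for x
  proof -
    have "(norm x)^2 = (\<Sum>b\<in>B. (x \<bullet> b)^2)"
      using inner_expand[of x x] by (simp add: power2_norm_eq_inner[symmetric] power2_eq_square)
    then have "lambda_min P * (norm x)^2 = (\<Sum>b\<in>B. lambda_min P * (x \<bullet> b)^2)" by (simp add: sum_distrib_left)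
    also have "\<dots> \<le> (\<Sum>b\<in>B. \<mu> b * (x \<bullet> b)^2)" by (intro sum_mono mult_right_mono lle) auto
    finally show ?thesis using quad by simp
  qed
  have "matrix (T \<circ> T) = matrix T ** matrix T" using matrix_compose[OF linT linT] .
  moreover have "T \<circ> T = (*v) P" using TT by auto
  ultimately have "P = matrix T ** matrix T" by (simp add: matrix_of_matrix_vector_mul)
  then have "det P = (det (matrix T))^2" by (simp add: det_mul power2_eq_square)
  then show ?thesis using linT linTi TTi TiT nT lowb lpos by blast
qed



lemma submult_iter:
  fixes f :: "nat \<Rightarrow> real"
  assumes nn: "\<And>k. f k \<ge> 0" and sm: "\<And>a b. f (a + b) \<le> f a * f b"
  shows "f (q * k + r) \<le> f k ^ q * f r"
proof (induction q)
  case 0 then show ?case by simp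
next
  case (Suc q)
  have "f (Suc q * k + r) = f (k + (q * k + r))" by (simp add: algebra_simps)
  also have "\<dots> \<le> f k * f (q * k + r)" by (rule sm)
  also have "\<dots> \<le> f k * (f k ^ q * f r)" using Suc.IH nn by (intro mult_left_mono) auto
  finally show ?case by simp
qed

lemma fekete_mult:
  fixes f :: "nat \<Rightarrow> real"
  assumes nn: "\<And>k. f k \<ge> 0" and sm: "\<And>a b. f (a + b) \<le> f a * f b"
  shows "(\<lambda>k. root k (f k)) \<longlonglongrightarrow> Inf ((\<lambda>k. root k (f k)) ` {1..})"
proof -
  define a where "a k = root k (f k)" for k
  define L where "L = Inf (a ` {1..})"
  have a_nn: "a k \<ge> 0" for k unfolding a_def using nn[of k] by (cases k) auto
  have bdd: "bdd_below (a ` {1..})" using a_nn by (intro bdd_belowI[of _ 0]) auto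
  have ne: "a ` {1..} \<noteq> {}" by auto
  have "a \<longlonglongrightarrow> L"
  proof (rule order_tendstoI)
    fix y assume "y < L"
    have "a n \<ge> L" if "n \<ge> 1" for n unfolding L_def using bdd that by (intro cInf_lower) auto
    then have "\<forall>n\<ge>1. y < a n" using \<open>y < L\<close> by (meson less_le_trans)
    then show "\<forall>\<^sub>F n in sequentially. y < a n"
      unfolding eventually_sequentially by blast
  next
    fix y assume "L < y"
    define y' where "y' = (L + y) / 2"
    have "L < y'" "y' < y" using \<open>L < y\<close> unfolding y'_def by auto
    then obtain k where k: "k \<ge> 1" "a k < y'" using cInf_less_iff[OF ne bdd] unfolding L_def by auto
    define t where "t = y'"
    have tpos: "t > 0" using a_nn[of k] k unfolding t_def by linarith
    have fk: "f k \<le> t ^ k"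
    proof -
      have "f k = (a k) ^ k" unfolding a_def using k nn by (simp add: real_root_pow_pos2)
      also have "\<dots> \<le> t ^ k" using k a_nn[of k] unfolding t_def by (intro power_mono) auto
      finally show ?thesis .
    qed
    define C where "C = (\<Sum>r<k. f r) + 1"
    have Cr: "f r \<le> C" if "r < k" for r
    proof -
      have "f r \<le> (\<Sum>r<k. f r)" using that nn by (intro member_le_sum) auto
      then show ?thesis unfolding C_def by simp
    qed
    have Cpos: "C > 0" unfolding C_def using nn by (simp add: sum_nonneg add_nonneg_pos)
    define d where "d = (min 1 t) ^ k"
    have dpos: "d > 0" unfolding d_def using tpos by simp
    have td: "t ^ r \<ge> d" if "r < k" for r
    proof -
      have "(min 1 t) ^ k \<le> (min 1 t) ^ r" using that tpos by (intro power_decreasing) auto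
      also have "\<dots> \<le> t ^ r" using tpos by (intro power_mono) auto
      finally show ?thesis unfolding d_def .
    qed
    define D where "D = C / d"
    have Dpos: "D > 0" unfolding D_def using Cpos dpos by simp
    have fn: "f n \<le> t ^ n * D" for n
    proof -
      define q r where "q = n div k" and "r = n mod k"
      have n: "n = q * k + r" unfolding q_def r_def by simp
      have rk: "r < k" unfolding r_def using k by simp
      have "f n \<le> f k ^ q * f r" unfolding n by (rule submult_iter[OF nn sm])
      also have "\<dots> \<le> (t ^ k) ^ q * C"
      proof (rule mult_mono)
        show "f k ^ q \<le> (t ^ k) ^ q" by (rule power_mono[OF fk nn])
        show "f r \<le> C" by (rule Cr[OF rk])
        show "0 \<le> (t ^ k) ^ q" using tpos by simp
        show "0 \<le> f r" by (rule nn)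
      qed
      also have "(t ^ k) ^ q = t ^ n / t ^ r" unfolding n using tpos
        by (simp add: power_add power_mult mult.commute)
      also have "t ^ n / t ^ r * C \<le> t ^ n / d * C"
        using td[OF rk] dpos tpos Cpos by (intro mult_right_mono divide_left_mono) auto
      finally show ?thesis unfolding D_def by simp
    qed
    have an: "a n \<le> t * root n D" if "n \<ge> 1" for n
    proof -
      have "a n \<le> root n (t ^ n * D)" unfolding a_def using fn that by simp
      also have "\<dots> = t * root n D" using that tpos Dpos by (simp add: real_root_mult real_root_pos2)
      finally show ?thesis .
    qed
    have "(\<lambda>n. t * root n D) \<longlonglongrightarrow> t * 1" by (intro tendsto_mult tendsto_const LIMSEQ_root_const Dpos)
    then have "\<forall>\<^sub>F n in sequentially. t * root n D < y" using \<open>y' < y\<close> unfolding t_def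
      by (intro order_tendstoD) auto
    then show "\<forall>\<^sub>F n in sequentially. a n < y"
      using eventually_ge_at_top[of 1] by eventually_elim (use an in force)
  qed
  then show ?thesis unfolding a_def L_def by simp
qed



lemma foldl_wp:
  fixes A :: "nat \<Rightarrow> real^'n^'n" and M0 :: "real^'n^'n"
  shows "foldl (\<lambda>M i. A i ** M) M0 ys = foldl (\<lambda>M i. A i ** M) (mat 1) ys ** M0"
proof (induction ys arbitrary: M0)
  case Nil then show ?case by (simp add: matrix_mul_lid)
next
  case (Cons y ys)
  have "foldl (\<lambda>M i. A i ** M) M0 (y # ys) = foldl (\<lambda>M i. A i ** M) (A y ** M0) ys" by simp
  also have "\<dots> = foldl (\<lambda>M i. A i ** M) (mat 1) ys ** (A y ** M0)" by (rule Cons.IH)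
  also have "foldl (\<lambda>M i. A i ** M) (mat 1) (y # ys) = foldl (\<lambda>M i. A i ** M) (mat 1) ys ** A y"
    using Cons.IH[of "A y ** mat 1"] by (simp add: matrix_mul_rid)
  ultimately show ?case by (simp add: matrix_mul_assoc)
qed

lemma word_prod_append: "word_prod A (xs @ ys) = word_prod A ys ** word_prod A xs"
  unfolding word_prod_def by (simp add: foldl_wp[of A "foldl (\<lambda>M i. A i ** M) (mat 1) xs"])

lemma words_split: "js \<in> words m (a + b) \<Longrightarrow> take a js \<in> words m a \<and> drop a js \<in> words m b"
  unfolding words_def using set_take_subset[of a js] set_drop_subset[of a js] by auto

lemma words_finite: "finite (words m k)"
proof -
  have "words m k = {xs. set xs \<subseteq> {1..m} \<and> length xs = k}" unfolding words_def by auto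
  then show ?thesis using finite_lists_length_eq[of "{1..m}" k] by simp
qed

lemma words_ne: "m > 0 \<Longrightarrow> words m k \<noteq> {}"
proof -
  assume "m > 0"
  then have "replicate k 1 \<in> words m k" unfolding words_def by auto
  then show ?thesis by blast
qed

lemma mono_root: "mono (root k)"
  by (cases k) (auto simp: mono_def)

lemma onorm_mat_mult:
  fixes X :: "real^'n^'m" and Y :: "real^'k^'n"
  shows "onorm ((*v) (X ** Y)) \<le> onorm ((*v) X) * onorm ((*v) Y)"
proof -
  have "(*v) (X ** Y) = (*v) X \<circ> (*v) Y" by (auto simp: matrix_vector_mul_assoc)
  then show ?thesis using onorm_compose[OF matrix_vector_mul_bounded_linear matrix_vector_mul_bounded_linear] by simp
qed

lemma jsr_le:
  fixes A :: "nat \<Rightarrow> real^'n^'n" and T Ti :: "real^'n \<Rightarrow> real^'n"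
  assumes m: "m > 0" and l: "l > 0" and beta: "\<beta> \<ge> 0"
    and linT: "linear T" and linTi: "linear Ti" and TiT: "\<And>x. Ti (T x) = x"
    and bound: "\<And>js y. js \<in> words m l \<Longrightarrow> norm (T (word_prod A js *v y)) \<le> \<beta> * norm (T y)"
  shows "jsr A m \<le> root l \<beta>"
proof -
  define f where "f k = Max ((\<lambda>js. onorm ((*v) (word_prod A js))) ` words m k)" for k
  have f_ge: "onorm ((*v) (word_prod A js)) \<le> f k" if "js \<in> words m k" for js k
    unfolding f_def using words_finite that by (intro Max_ge) auto
  have f_nn: "f k \<ge> 0" for k
  proof -
    obtain js where "js \<in> words m k" using words_ne[OF m] by blast
    then show ?thesis using f_ge[of js k] onorm_pos_le[OF matrix_vector_mul_bounded_linear] by (meson order_trans)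
  qed
  have f_le: "f k \<le> c" if "\<And>js. js \<in> words m k \<Longrightarrow> onorm ((*v) (word_prod A js)) \<le> c" for k c
    unfolding f_def using words_finite words_ne[OF m] that by (subst Max_le_iff) auto
  have sm: "f (a + b) \<le> f a * f b" for a b
  proof (rule f_le)
    fix js assume js: "js \<in> words m (a + b)"
    have js_eq: "js = take a js @ drop a js" by simp
    have w: "take a js \<in> words m a" "drop a js \<in> words m b" using words_split[OF js] by auto
    have "onorm ((*v) (word_prod A js)) = onorm ((*v) (word_prod A (drop a js) ** word_prod A (take a js)))"
      by (subst js_eq) (simp only: word_prod_append)
    also have "\<dots> \<le> onorm ((*v) (word_prod A (drop a js))) * onorm ((*v) (word_prod A (take a js)))"
      by (rule onorm_mat_mult)
    also have "\<dots> \<le> f b * f a"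
      using f_ge[OF w(2)] f_ge[OF w(1)] f_nn onorm_pos_le[OF matrix_vector_mul_bounded_linear]
      by (intro mult_mono) auto
    finally show "onorm ((*v) (word_prod A js)) \<le> f a * f b" by (simp add: mult.commute)
  qed
  define L where "L = Inf ((\<lambda>k. root k (f k)) ` {1..})"
  have conv: "(\<lambda>k. root k (f k)) \<longlonglongrightarrow> L" unfolding L_def by (rule fekete_mult[OF f_nn sm])
  have seq: "(\<lambda>k. Max ((\<lambda>js. root k (onorm (\<lambda>x. word_prod A js *v x))) ` words m k)) = (\<lambda>k. root k (f k))"
  proof
    fix k
    have "root k (f k) = Max (root k ` (\<lambda>js. onorm ((*v) (word_prod A js))) ` words m k)"
      unfolding f_def using words_finite words_ne[OF m] by (intro mono_Max_commute mono_root) auto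
    then show "Max ((\<lambda>js. root k (onorm (\<lambda>x. word_prod A js *v x))) ` words m k) = root k (f k)"
      by (simp add: image_image)
  qed
  have jsrL: "jsr A m = L" unfolding jsr_def seq using conv by (rule limI)
  \<comment> \<open>bounds along the subsequence q*l\<close>
  have blT: "bounded_linear T" "bounded_linear Ti" using linT linTi by (auto simp: linear_conv_bounded_linear)
  define K where "K = onorm Ti * onorm T + 1"
  have Kpos: "K > 0" unfolding K_def using onorm_pos_le[OF blT(1)] onorm_pos_le[OF blT(2)] by (simp add: add_nonneg_pos)
  have iter: "norm (T (word_prod A js *v y)) \<le> \<beta> ^ q * norm (T y)" if "js \<in> words m (q * l)" for q js y
    using that
  proof (induction q arbitrary: js y)
    case 0
    then have "js = []" unfolding words_def by auto
    then show ?case by (simp add: word_prod_def)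
  next
    case (Suc q)
    have js: "js \<in> words m (q * l + l)" using Suc.prems by (simp add: add.commute)
    define xs ys where "xs = take (q * l) js" and "ys = drop (q * l) js"
    have w: "xs \<in> words m (q * l)" "ys \<in> words m l" using words_split[OF js] unfolding xs_def ys_def by auto
    have "js = xs @ ys" unfolding xs_def ys_def by simp
    then have "word_prod A js *v y = word_prod A ys *v (word_prod A xs *v y)"
      by (simp add: word_prod_append matrix_vector_mul_assoc)
    then have "norm (T (word_prod A js *v y)) \<le> \<beta> * norm (T (word_prod A xs *v y))"
      using bound[OF w(2)] by simp
    also have "\<dots> \<le> \<beta> * (\<beta> ^ q * norm (T y))" using Suc.IH[OF w(1)] beta by (intro mult_left_mono) auto
    finally show ?case by simp
  qed
  have fql: "f (q * l) \<le> K * \<beta> ^ q" for q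
  proof (rule f_le)
    fix js assume js: "js \<in> words m (q * l)"
    show "onorm ((*v) (word_prod A js)) \<le> K * \<beta> ^ q"
    proof (rule onorm_le)
      fix y
      have "norm (word_prod A js *v y) = norm (Ti (T (word_prod A js *v y)))" by (simp add: TiT)
      also have "\<dots> \<le> onorm Ti * norm (T (word_prod A js *v y))" by (rule onorm[OF blT(2)])
      also have "\<dots> \<le> onorm Ti * (\<beta> ^ q * norm (T y))" using iter[OF js] onorm_pos_le[OF blT(2)] by (intro mult_left_mono)
      also have "\<dots> \<le> onorm Ti * (\<beta> ^ q * (onorm T * norm y))"
        using onorm[OF blT(1), of y] onorm_pos_le[OF blT(2)] beta by (intro mult_left_mono) auto
      also have "\<dots> \<le> K * \<beta> ^ q * norm y" unfolding K_def using beta by (simp add: algebra_simps)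
      finally show "norm (word_prod A js *v y) \<le> K * \<beta> ^ q * norm y" .
    qed
  qed
  have sub: "strict_mono (\<lambda>q. q * l)" using l by (intro strict_monoI) auto
  have c1: "(\<lambda>q. root (q * l) (f (q * l))) \<longlonglongrightarrow> L"
    using LIMSEQ_subseq_LIMSEQ[OF conv sub] by (simp add: o_def)
  have c2: "(\<lambda>q. root (q * l) K * root l \<beta>) \<longlonglongrightarrow> 1 * root l \<beta>"
    using LIMSEQ_subseq_LIMSEQ[OF LIMSEQ_root_const[OF Kpos] sub] by (intro tendsto_mult tendsto_const) (simp add: o_def)
  have le: "root (q * l) (f (q * l)) \<le> root (q * l) K * root l \<beta>" if "q \<ge> 1" for q
  proof -
    have ql: "q * l > 0" using that l by simp
    have "root (q * l) (f (q * l)) \<le> root (q * l) (K * \<beta> ^ q)" using fql ql by simp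
    also have "\<dots> = root (q * l) K * root (q * l) (\<beta> ^ q)" by (simp add: real_root_mult)
    also have "root (q * l) (\<beta> ^ q) = root l \<beta>"
    proof -
      have "root (q * l) (\<beta> ^ q) = root l (root q (\<beta> ^ q))" by (simp add: real_root_mult_exp mult.commute)
      also have "root q (\<beta> ^ q) = \<beta>" using that beta by (simp add: real_root_pos2)
      finally show ?thesis .
    qed
    finally show ?thesis .
  qed
  have "L \<le> 1 * root l \<beta>"
    by (rule LIMSEQ_le[OF c1 c2]) (use le in auto)
  then show ?thesis using jsrL by simp
qed



definition scone :: "(real^'n) set \<Rightarrow> (real^'n) set" where
  "scone X = {t *\<^sub>R x | x t. x \<in> X \<and> t \<in> {0..1}}"

lemma sph_measure_scone:
  fixes X :: "(real^'n) set"
  shows "sph_measure X = measure lebesgue (scone X) / measure lebesgue (cball (0::real^'n) 1)"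
  unfolding sph_measure_def scone_def by simp

lemma scone_image: "scone X = (\<lambda>p. fst p *\<^sub>R snd p) ` ({0..1} \<times> X)"
  unfolding scone_def by force

lemma scone_compact: "compact X \<Longrightarrow> compact (scone X)"
  unfolding scone_image
  by (intro compact_continuous_image compact_Times compact_Icc continuous_intros) auto

lemma scone_meas:
  fixes X :: "(real^'n) set"
  assumes X: "X \<in> sets borel" and XS: "X \<subseteq> sphere 0 1"
  shows "scone X \<in> lmeasurable"
proof -
  have eq: "scone X = (cball 0 1 \<inter> (sgn -` X) - {0}) \<union> (if X = {} then {} else {0})"
  proof
    show "scone X \<subseteq> (cball 0 1 \<inter> (sgn -` X) - {0}) \<union> (if X = {} then {} else {0})"
    proof
      fix y assume "y \<in> scone X"
      then obtain x t where y: "y = t *\<^sub>R x" "x \<in> X" "t \<in> {0..1}" unfolding scone_def by blast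
      have nx: "norm x = 1" using XS y(2) by auto
      show "y \<in> (cball 0 1 \<inter> (sgn -` X) - {0}) \<union> (if X = {} then {} else {0})"
      proof (cases "t = 0")
        case True then show ?thesis using y by auto
      next
        case False
        then have "t > 0" using y(3) by auto
        then have "sgn y = x" using nx y(1) by (simp add: sgn_div_norm)
        then show ?thesis using y nx \<open>t > 0\<close> by auto
      qed
    qed
    show "(cball 0 1 \<inter> (sgn -` X) - {0}) \<union> (if X = {} then {} else {0}) \<subseteq> scone X"
    proof
      fix y assume y: "y \<in> (cball 0 1 \<inter> (sgn -` X) - {0}) \<union> (if X = {} then {} else {0})"
      show "y \<in> scone X"
      proof (cases "y = 0")
        case True
        then obtain x where "x \<in> X" using y by (auto split: if_splits)
        then show ?thesis unfolding scone_def using True by (intro CollectI exI[of _ x] exI[of _ 0]) auto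
      next
        case False
        then have "y = norm y *\<^sub>R sgn y" "sgn y \<in> X" "norm y \<in> {0..1}" using y False by (auto simp: sgn_div_norm split: if_splits)
        then show ?thesis unfolding scone_def by blast
      qed
    qed
  qed
  have sgnm: "(sgn::real^'n\<Rightarrow>_) \<in> borel_measurable borel"
    unfolding sgn_div_norm by measurable
  have "sgn -` X \<in> sets borel" using measurable_sets[OF sgnm X] by simp
  then have "(cball 0 1 \<inter> (sgn -` X) - {0}) \<union> (if X = {} then {} else {0}) \<in> sets borel"
    by (auto intro!: sets.Un sets.Diff sets.Int borel_closed)
  then have "scone X \<in> sets lebesgue" unfolding eq by (metis sets_completionI_sets sets_lborel)
  moreover have "bounded (scone X)" unfolding eq by (auto intro: bounded_subset[OF bounded_cball])
  ultimately show ?thesis by (simp add: bounded_set_imp_lmeasurable)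
qed

lemma ball_vol_pos: "measure lebesgue (cball (0::real^'n) 1) > 0"
proof -
  have "measure lebesgue (cball (0::real^'n) 1) = measure lborel (cball (0::real^'n) 1)"
    by (simp add: measure_completion)
  then show ?thesis by simp
qed

lemma Delta_nonneg:
  fixes X :: "(real^'n) set"
  shows "Delta X \<ge> 0"
proof -
  define R where "R = {r \<in> {0..1}. cball (0::real^'n) r \<subseteq> convex hull (sphere 0 1 - X)}"
  have "Delta X = (if R = {} then 0 else Sup R)" unfolding Delta_def R_def Let_def ..
  moreover have "Sup R \<ge> 0" if ne: "R \<noteq> {}"
  proof -
    obtain r where "r \<in> R" using ne by blast
    moreover have "bdd_above R" unfolding R_def by (auto intro: bdd_aboveI[of _ 1])
    ultimately have "r \<le> Sup R" by (simp add: cSup_upper)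
    then show ?thesis using \<open>r \<in> R\<close> unfolding R_def by auto
  qed
  ultimately show ?thesis by auto
qed

lemma Delta_le:
  fixes X :: "(real^'n) set" and e :: "real^'n"
  assumes e: "norm e = 1" and r: "r \<ge> 0" and sep: "\<And>z. z \<in> sphere 0 1 - X \<Longrightarrow> e \<bullet> z < r"
  shows "Delta X \<le> r"
proof -
  define R where "R = {r \<in> {0..1}. cball (0::real^'n) r \<subseteq> convex hull (sphere 0 1 - X)}"
  have D: "Delta X = (if R = {} then 0 else Sup R)" unfolding Delta_def R_def Let_def ..
  have "\<rho> \<le> r" if "\<rho> \<in> R" for \<rho>
  proof -
    have "\<rho> \<ge> 0" "cball 0 \<rho> \<subseteq> convex hull (sphere 0 1 - X)" using that unfolding R_def by auto
    moreover have "convex hull (sphere 0 1 - X) \<subseteq> {z. e \<bullet> z < r}"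
      using sep by (intro hull_minimal convex_halfspace_lt) auto
    moreover have "\<rho> *\<^sub>R e \<in> cball 0 \<rho>" using e \<open>\<rho> \<ge> 0\<close> by simp
    ultimately have "e \<bullet> (\<rho> *\<^sub>R e) < r" by blast
    then show ?thesis using e by (simp add: norm_eq_1)
  qed
  then show ?thesis unfolding D using r by (auto intro: cSup_least)
qed



theorem theorem5:
  fixes A :: "nat \<Rightarrow> real^'n^'n" and m l :: nat and \<gamma> \<eta> \<epsilon> :: real
    and \<omega> :: "((real^'n) \<times> nat list) set" and P :: "real^'n^'n" and St :: "(real^'n) set"
  assumes "m > 0" and "l > 0" and "\<gamma> > 0"
    and "finite \<omega>" and "\<omega> \<subseteq> sphere 0 1 \<times> words m l" and "\<eta> > 0"
    and "opt_solution A l \<eta> \<omega> P" and "posdef P"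
    and "St \<in> sets borel" and "St \<subseteq> sphere 0 1" and "sph_measure St \<le> \<epsilon>"
    and "\<forall>x \<in> sphere 0 1 - St. \<forall>js \<in> words m l.
           quadf P (word_prod A js *v x) \<le> \<gamma> ^ (2*l) * quadf P x"
  shows "delta_fun (\<epsilon> * kappa P / 2) TYPE('n) > 0 \<longrightarrow>
         jsr A m \<le> \<gamma> / root l (delta_fun (\<epsilon> * kappa P / 2) TYPE('n))"
proof (intro impI)
  define \<delta> where "\<delta> = delta_fun (\<epsilon> * kappa P / 2) TYPE('n)"
  assume "delta_fun (\<epsilon> * kappa P / 2) TYPE('n) > 0"
  then have dpos: "\<delta> > 0" unfolding \<delta>_def .
  obtain T Ti where linT: "linear T" and linTi: "linear Ti" and TTi: "\<And>x. T (Ti x) = x"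
    and TiT: "\<And>x. Ti (T x) = x" and nT: "\<And>x. (norm (T x))^2 = quadf P x"
    and lowb: "\<And>x. lambda_min P * (norm x)^2 \<le> quadf P x" and lpos: "lambda_min P > 0"
    and detP: "det P = (det (matrix T))^2"
    using sqrt_decomp[OF assms(8)] by blast
  define s where "s = sqrt (lambda_min P)"
  have spos: "s > 0" unfolding s_def using lpos by simp
  have Tlow: "s * norm x \<le> norm (T x)" for x
  proof -
    have "(s * norm x)^2 \<le> (norm (T x))^2"
      unfolding nT using lowb[of x] lpos unfolding s_def by (simp add: power_mult_distrib)
    then show ?thesis by (rule power2_le_imp_le) simp
  qed
  have Tiup: "s * norm (Ti z) \<le> norm z" for z using Tlow[of "Ti z"] TTi by simp
  have blT: "bounded_linear T" "bounded_linear Ti" using linT linTi by (auto simp: linear_conv_bounded_linear)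
  define G where "G = {x. \<forall>js\<in>words m l. quadf P (word_prod A js *v x) \<le> \<gamma>^(2*l) * quadf P x}"
  have quad_scale: "quadf P (c *\<^sub>R x) = c^2 * quadf P x" for c x
    unfolding quadf_def by (simp add: matrix_vector_mult_scaleR power2_eq_square)
  have G_scale: "c *\<^sub>R x \<in> G" if "x \<in> G" for c x
  proof -
    { fix js assume js: "js \<in> words m l"
      have "quadf P (word_prod A js *v (c *\<^sub>R x)) = c^2 * quadf P (word_prod A js *v x)"
        by (simp add: matrix_vector_mult_scaleR quad_scale)
      also have "\<dots> \<le> c^2 * (\<gamma>^(2*l) * quadf P x)" using that js unfolding G_def
        by (intro mult_left_mono) auto
      finally have "quadf P (word_prod A js *v (c *\<^sub>R x)) \<le> \<gamma>^(2*l) * quadf P (c *\<^sub>R x)"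
        by (simp add: quad_scale algebra_simps) }
    then show ?thesis unfolding G_def by auto
  qed
  have G0: "0 \<in> G" unfolding G_def quadf_def by simp
  have G_good: "x \<in> G" if "x \<in> sphere 0 1 - St" for x using assms(12) that unfolding G_def by auto
  have St_of: "(1 / norm v) *\<^sub>R v \<in> St" if "v \<notin> G" for v
  proof -
    have "v \<noteq> 0" using that G0 by auto
    let ?x = "(1 / norm v) *\<^sub>R v"
    have "?x \<in> sphere 0 1" using \<open>v \<noteq> 0\<close> by simp
    moreover have "?x \<notin> G"
    proof
      assume "?x \<in> G"
      then have "norm v *\<^sub>R ?x \<in> G" by (rule G_scale)
      then show False using \<open>v \<noteq> 0\<close> that by simp
    qed
    ultimately show ?thesis using G_good by blast
  qed
  define Z where "Z = {z \<in> sphere 0 1. Ti z \<in> G}"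
  define K where "K = convex hull Z"
  have Cjs: "closure K \<subseteq> {z. norm (T (word_prod A js *v Ti z)) \<le> \<gamma>^l}" if js: "js \<in> words m l" for js
  proof -
    define F where "F z = T (word_prod A js *v Ti z)" for z
    have linF: "linear F"
    proof -
      have "F = T \<circ> ((*v) (word_prod A js) \<circ> Ti)" unfolding F_def by auto
      then show ?thesis using linT linTi matrix_vector_mul_linear by (simp add: linear_compose)
    qed
    have eq: "{z. norm (T (word_prod A js *v Ti z)) \<le> \<gamma>^l} = F -` cball 0 (\<gamma>^l)"
      unfolding F_def by auto
    have cvx: "convex (F -` cball 0 (\<gamma>^l))" by (intro convex_linear_vimage linF convex_cball)
    have cl: "closed (F -` cball 0 (\<gamma>^l))"
      using linF by (intro closed_vimage closed_cball linear_continuous_on) (simp add: linear_conv_bounded_linear)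
    have "Z \<subseteq> F -` cball 0 (\<gamma>^l)"
    proof
      fix z assume z: "z \<in> Z"
      have "(norm (F z))^2 = quadf P (word_prod A js *v Ti z)" unfolding F_def nT ..
      also have "\<dots> \<le> \<gamma>^(2*l) * quadf P (Ti z)" using z js unfolding Z_def G_def by auto
      also have "quadf P (Ti z) = 1" using nT[of "Ti z"] TTi z unfolding Z_def by simp
      finally have "(norm (F z))^2 \<le> (\<gamma>^l)^2" by (simp add: power_mult[symmetric] mult.commute)
      then have "norm (F z) \<le> \<gamma>^l" by (rule power2_le_imp_le) (use assms(3) in simp)
      then show "z \<in> F -` cball 0 (\<gamma>^l)" by simp
    qed
    then have "K \<subseteq> F -` cball 0 (\<gamma>^l)" unfolding K_def using cvx by (rule hull_minimal)
    then have "closure K \<subseteq> F -` cball 0 (\<gamma>^l)" using cl by (rule closure_minimal)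
    then show ?thesis unfolding eq .
  qed
  have claim: "cball 0 r \<subseteq> closure K" if r: "0 < r" "r < \<delta>" for r
  proof (rule ccontr)
    assume "\<not> cball 0 r \<subseteq> closure K"
    then obtain w where w: "w \<in> cball 0 r" "w \<notin> closure K" by blast
    obtain e where e: "norm e = 1" and eZ: "\<And>z. z \<in> Z \<Longrightarrow> e \<bullet> z < r"
    proof (cases "closure K = {}")
      case True
      then have "Z = {}" unfolding K_def using hull_subset[of Z convex] closure_subset[of "convex hull Z"] by auto
      obtain e :: "real^'n" where "norm e = 1" using vector_choose_size[of 1] by auto
      then show ?thesis using that \<open>Z = {}\<close> by blast
    next
      case False
      obtain a b where ab: "a \<bullet> w < b" "\<And>x. x \<in> closure K \<Longrightarrow> b < a \<bullet> x"
        using separating_hyperplane_closed_point[OF convex_closure[OF convex_convex_hull] closed_closure w(2)[unfolded K_def]]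
        unfolding K_def by blast
      obtain x0 where "x0 \<in> closure K" using False ex_in_conv[of "closure K"] by meson
      then have "a \<noteq> 0" using ab(2) ab(1) by force
      then have na: "norm a > 0" by simp
      define e where "e = (- 1 / norm a) *\<^sub>R a"
      have ne: "norm e = 1" unfolding e_def using na by simp
      have "e \<bullet> z < r" if z: "z \<in> Z" for z
      proof -
        have "z \<in> closure K" using z unfolding K_def
          using hull_subset[of Z convex] closure_subset[of "convex hull Z"] by auto
        then have "a \<bullet> w < a \<bullet> z" using ab by force
        then have "e \<bullet> z < e \<bullet> w" unfolding e_def using na by (simp add: divide_strict_right_mono)
        also have "e \<bullet> w \<le> norm e * norm w" by (rule norm_cauchy_schwarz)
        also have "\<dots> \<le> r" using ne w(1) by simp
        finally show ?thesis .
      qed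
      then show ?thesis using that ne by blast
    qed
    define Cap where "Cap = {z \<in> sphere 0 1. e \<bullet> z \<ge> r}"
    have Cap_bad: "Ti c \<notin> G" if "c \<in> Cap" for c
      using that eZ[of c] unfolding Cap_def Z_def by force
    have Cap_eq: "Cap = sphere 0 1 \<inter> {z. r \<le> e \<bullet> z}" unfolding Cap_def by auto
    have Cap_cpt: "compact Cap" unfolding Cap_eq by (intro compact_Int_closed compact_sphere closed_halfspace_ge)
    define SC where "SC = (\<lambda>x. s *\<^sub>R x) ` scone Cap"
    define CW where "CW = Ti ` SC"
    define NW where "NW = (\<lambda>x. (-1) *\<^sub>R x) ` CW"
    have SC_cpt: "compact SC" unfolding SC_def
      by (intro compact_continuous_image scone_compact Cap_cpt continuous_intros)
    have CW_cpt: "compact CW" unfolding CW_def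
      using SC_cpt blT(2) by (intro compact_continuous_image linear_continuous_on)
    have NW_cpt: "compact NW" unfolding NW_def
      using CW_cpt by (intro compact_continuous_image continuous_intros)
    have CW_mem: "\<exists>c t. c \<in> Cap \<and> t \<in> {0..1} \<and> y = (s * t) *\<^sub>R Ti c" if yCW: "y \<in> CW" for y
    proof -
      obtain c t where "c \<in> Cap" "t \<in> {0..1}" "y = Ti (s *\<^sub>R (t *\<^sub>R c))"
        using yCW unfolding CW_def SC_def scone_def by blast
      moreover have "Ti (s *\<^sub>R (t *\<^sub>R c)) = (s * t) *\<^sub>R Ti c" using linear_cmul[OF linTi] by simp
      ultimately show ?thesis by blast
    qed
    have inSt: "k *\<^sub>R Ti c \<in> scone St" if c: "c \<in> Cap" and k: "norm (k *\<^sub>R Ti c) \<le> 1" for c k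
    proof (cases "k = 0")
      case True
      have "(1 / norm (Ti c)) *\<^sub>R Ti c \<in> St" using St_of Cap_bad[OF c] by blast
      then have "0 *\<^sub>R ((1 / norm (Ti c)) *\<^sub>R Ti c) \<in> scone St" unfolding scone_def
        by (intro CollectI exI[of _ "(1 / norm (Ti c)) *\<^sub>R Ti c"] exI[of _ "0::real"]) auto
      then show ?thesis using True by simp
    next
      case False
      let ?y = "k *\<^sub>R Ti c"
      have "?y \<notin> G"
      proof
        assume "?y \<in> G"
        then have "(1/k) *\<^sub>R ?y \<in> G" by (rule G_scale)
        then show False using False Cap_bad[OF c] by simp
      qed
      then have St1: "(1 / norm ?y) *\<^sub>R ?y \<in> St" by (rule St_of)
      have "?y \<noteq> 0" using \<open>?y \<notin> G\<close> G0 by auto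
      then have "?y = norm ?y *\<^sub>R ((1 / norm ?y) *\<^sub>R ?y)" by simp
      then show ?thesis unfolding scone_def using St1 k by (intro CollectI exI[of _ "(1 / norm ?y) *\<^sub>R ?y"] exI[of _ "norm ?y"]) auto
    qed
    have norm_bd: "norm (k *\<^sub>R Ti c) \<le> 1" if "c \<in> Cap" "\<bar>k\<bar> = s * t" "t \<in> {0..1}" for c k t
    proof -
      have "norm (k *\<^sub>R Ti c) = t * (s * norm (Ti c))" using that by (simp add: algebra_simps)
      also have "\<dots> \<le> t * norm c" using that Tiup[of c] by (intro mult_left_mono) auto
      also have "\<dots> \<le> 1" using that unfolding Cap_def by auto
      finally show ?thesis .
    qed
    have CW_sub: "CW \<subseteq> scone St"
    proof
      fix y assume "y \<in> CW"
      then obtain c t where ct: "c \<in> Cap" "t \<in> {0..1}" "y = (s * t) *\<^sub>R Ti c" using CW_mem by blast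
      have "\<bar>s * t\<bar> = s * t" using spos ct(2) by simp
      then show "y \<in> scone St" using inSt[OF ct(1) norm_bd[OF ct(1) _ ct(2)]] ct(3) by simp
    qed
    have NW_sub: "NW \<subseteq> scone St"
    proof
      fix y assume "y \<in> NW"
      then obtain y0 where "y0 \<in> CW" "y = (-1) *\<^sub>R y0" unfolding NW_def by blast
      then obtain c t where ct: "c \<in> Cap" "t \<in> {0..1}" "y = (- (s * t)) *\<^sub>R Ti c" using CW_mem by fastforce
      have ab: "\<bar>- (s * t)\<bar> = s * t" using spos ct(2) by simp
      have "(- (s * t)) *\<^sub>R Ti c \<in> scone St" using inSt[OF ct(1) norm_bd[OF ct(1) ab ct(2)]] .
      then show "y \<in> scone St" using ct(3) by simp
    qed
    have CW_int: "CW \<inter> NW \<subseteq> {0}"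
    proof
      fix y assume y: "y \<in> CW \<inter> NW"
      then obtain c t where ct: "c \<in> Cap" "t \<in> {0..1}" "y = (s * t) *\<^sub>R Ti c" using CW_mem by blast
      obtain y0 where "y0 \<in> CW" "y = (-1) *\<^sub>R y0" using y unfolding NW_def by blast
      then obtain c' t' where ct': "c' \<in> Cap" "t' \<in> {0..1}" "- y = (s * t') *\<^sub>R Ti c'" using CW_mem by fastforce
      have "T y = (s * t) *\<^sub>R c" using ct(3) linear_cmul[OF linT] TTi by simp
      moreover have "T (- y) = (s * t') *\<^sub>R c'" using ct'(3) linear_cmul[OF linT] TTi by simp
      moreover have "T (- y) = - T y" using linear_neg[OF linT] by simp
      ultimately have "(s * t') *\<^sub>R c' = - ((s * t) *\<^sub>R c)" by simp
      then have "(s * t) *\<^sub>R c + (s * t') *\<^sub>R c' = 0" by simp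
      then have "e \<bullet> ((s * t) *\<^sub>R c + (s * t') *\<^sub>R c') = 0" by simp
      then have eq0: "(s * t) * (e \<bullet> c) + (s * t') * (e \<bullet> c') = 0" by (simp add: inner_add_right)
      have ec: "e \<bullet> c \<ge> r" "e \<bullet> c' \<ge> r" using ct(1) ct'(1) unfolding Cap_def by auto
      have "(s * t) * (e \<bullet> c) \<ge> 0" "(s * t') * (e \<bullet> c') \<ge> 0" using spos ct(2) ct'(2) ec r(1) by auto
      then have "(s * t) * (e \<bullet> c) = 0" using eq0 by linarith
      then have "t = 0" using spos ec r(1) by auto
      then show "y \<in> {0}" using ct(3) by simp
    qed
    have CW_m: "CW \<in> lmeasurable" "NW \<in> lmeasurable" "SC \<in> lmeasurable" "scone Cap \<in> lmeasurable"
      using CW_cpt NW_cpt SC_cpt scone_compact[OF Cap_cpt] by (auto intro: lmeasurable_compact)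
    have mSC: "measure lebesgue SC = s ^ CARD('n) * measure lebesgue (scone Cap)"
      unfolding SC_def using measure_linear_image_gen[OF linear_scaleR CW_m(4), of s] spos by simp
    have TCW: "T ` CW = SC" unfolding CW_def image_image TTi by simp
    have mT: "measure lebesgue SC = \<bar>det (matrix T)\<bar> * measure lebesgue CW"
      using measure_linear_image_gen[OF linT CW_m(1)] TCW by simp
    have mN: "measure lebesgue NW = measure lebesgue CW"
    proof -
      have e1: "measure lebesgue NW = \<bar>det (matrix ((*\<^sub>R) (-1::real)) :: real^'n^'n)\<bar> * measure lebesgue CW"
        unfolding NW_def by (rule measure_linear_image_gen[OF linear_scaleR CW_m(1)])
      have e2: "det (matrix ((*\<^sub>R) (-1::real)) :: real^'n^'n) = (-1)^CARD('n)" by (rule det_matrix_scaleR)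
      show ?thesis using e1 unfolding e2 by (simp add: power_abs)
    qed
    have "negligible (CW \<inter> NW)" using CW_int negligible_subset negligible_sing by metis
    then have m0: "measure lebesgue (CW \<inter> NW) = 0" by (rule negligible_imp_measure0)
    have mU: "measure lebesgue (CW \<union> NW) = 2 * measure lebesgue CW"
      using measure_Un3[OF CW_m(1) CW_m(2)] m0 mN by simp
    have Stm: "scone St \<in> lmeasurable" using scone_meas[OF assms(9) assms(10)] .
    have "measure lebesgue (CW \<union> NW) \<le> measure lebesgue (scone St)"
      using CW_sub NW_sub CW_m Stm by (intro measure_mono_fmeasurable) auto
    define V where "V = measure lebesgue (cball (0::real^'n) 1)"
    have Vpos: "V > 0" unfolding V_def by (rule ball_vol_pos)
    have "measure lebesgue (scone St) / V \<le> \<epsilon>" using assms(11) unfolding sph_measure_scone V_def .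
    then have "measure lebesgue (scone St) \<le> \<epsilon> * V" using Vpos by (simp add: divide_le_eq)
    have mCW: "2 * measure lebesgue CW \<le> \<epsilon> * V"
      using mU \<open>measure lebesgue (CW \<union> NW) \<le> measure lebesgue (scone St)\<close> \<open>measure lebesgue (scone St) \<le> \<epsilon> * V\<close> by simp
    define dT where "dT = \<bar>det (matrix T)\<bar>"
    have sn: "s ^ CARD('n) > 0" using spos by simp
    have kap: "kappa P = dT / s ^ CARD('n)"
    proof -
      have "kappa P = sqrt (det P) / sqrt (lambda_min P ^ CARD('n))" unfolding kappa_def by (simp add: real_sqrt_divide)
      also have "sqrt (det P) = dT" unfolding detP dT_def by simp
      also have "sqrt (lambda_min P ^ CARD('n)) = s ^ CARD('n)" unfolding s_def by (simp add: real_sqrt_power)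
      finally show ?thesis .
    qed
    have capm: "sph_measure Cap \<le> \<epsilon> * kappa P / 2"
    proof -
      have "s ^ CARD('n) * measure lebesgue (scone Cap) = dT * measure lebesgue CW"
        using mSC mT unfolding dT_def by simp
      also have "\<dots> \<le> dT * (\<epsilon> * V / 2)" using mCW unfolding dT_def by (intro mult_left_mono) auto
      finally have "measure lebesgue (scone Cap) \<le> dT * (\<epsilon> * V / 2) / s ^ CARD('n)"
        using sn by (simp add: field_simps)
      then have "measure lebesgue (scone Cap) / V \<le> dT * (\<epsilon> * V / 2) / s ^ CARD('n) / V"
        by (rule divide_right_mono) (use Vpos in auto)
      also have "\<dots> = \<epsilon> * kappa P / 2" unfolding kap using Vpos sn by (simp add: field_simps)
      finally show ?thesis unfolding sph_measure_scone V_def .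
    qed
    have Cap_borel: "Cap \<in> sets borel" using Cap_cpt by (simp add: borel_closed compact_imp_closed)
    have Cap_sub: "Cap \<subseteq> sphere 0 1" unfolding Cap_def by auto
    have "\<delta> \<le> Delta Cap"
      unfolding \<delta>_def delta_fun_def
    proof (rule cInf_lower)
      show "Delta Cap \<in> {Delta X |X :: (real^'n) set. X \<in> sets borel \<and> X \<subseteq> sphere 0 1 \<and> sph_measure X \<le> \<epsilon> * kappa P / 2}"
        using Cap_borel Cap_sub capm by blast
      show "bdd_below {Delta X |X :: (real^'n) set. X \<in> sets borel \<and> X \<subseteq> sphere 0 1 \<and> sph_measure X \<le> \<epsilon> * kappa P / 2}"
        by (rule bdd_belowI[of _ 0]) (auto simp: Delta_nonneg)
    qed
    also have "Delta Cap \<le> r"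
      by (rule Delta_le[OF e]) (use r in \<open>auto simp: Cap_def\<close>)
    finally show False using r by simp
  qed
  define \<beta> where "\<beta> = \<gamma>^l / \<delta>"
  have beta: "\<beta> \<ge> 0" unfolding \<beta>_def using assms(3) dpos by simp
  have bnd: "norm (T (word_prod A js *v y)) \<le> \<beta> * norm (T y)" if js: "js \<in> words m l" for js y
  proof -
    define a where "a = norm (T (word_prod A js *v y))"
    define c where "c = \<gamma>^l * norm (T y)"
    have c0: "c \<ge> 0" unfolding c_def using assms(3) by simp
    have ra: "r * a \<le> c" if r: "0 < r" "r < \<delta>" for r
    proof (cases "T y = 0")
      case True
      then have "y = 0" using TiT[of y] linear_0[OF linTi] by simp
      then show ?thesis unfolding a_def c_def using linear_0[OF linT] by simp
    next
      case False
      define z where "z = (r / norm (T y)) *\<^sub>R T y"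
      have "z \<in> cball 0 r" unfolding z_def using False r by simp
      then have "z \<in> closure K" using claim[OF r] by blast
      then have "norm (T (word_prod A js *v Ti z)) \<le> \<gamma>^l" using Cjs[OF js] by blast
      moreover have "Ti z = (r / norm (T y)) *\<^sub>R y" unfolding z_def using linear_cmul[OF linTi] TiT by simp
      ultimately have "norm (T ((r / norm (T y)) *\<^sub>R (word_prod A js *v y))) \<le> \<gamma>^l"
        by (simp add: matrix_vector_mult_scaleR)
      then have "(r / norm (T y)) * a \<le> \<gamma>^l" unfolding a_def using linear_cmul[OF linT] r by simp
      then show ?thesis unfolding c_def using False by (simp add: field_simps)
    qed
    have "\<delta> * a \<le> c"
    proof (rule ccontr)
      assume "\<not> \<delta> * a \<le> c"
      then have "\<delta> * a > c" by simp
      then have apos: "a > 0" using c0 dpos by (smt (verit) mult_nonpos_nonneg mult_nonneg_nonpos)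
      define r where "r = (\<delta> + c / a) / 2"
      have "c / a < \<delta>" using \<open>\<delta> * a > c\<close> apos by (simp add: divide_less_eq mult.commute)
      moreover have "c / a \<ge> 0" using c0 apos by simp
      ultimately have "0 < r" "r < \<delta>" unfolding r_def using dpos by auto
      then have "r * a \<le> c" by (rule ra)
      moreover have "r * a = (\<delta> * a + c) / 2" unfolding r_def using apos by (simp add: field_simps)
      ultimately show False using \<open>\<delta> * a > c\<close> by simp
    qed
    then show ?thesis unfolding \<beta>_def a_def c_def using dpos by (simp add: field_simps)
  qed
  have "jsr A m \<le> root l \<beta>" by (rule jsr_le[OF assms(1) assms(2) beta linT linTi TiT bnd])
  also have "root l \<beta> = \<gamma> / root l \<delta>"
    unfolding \<beta>_def using assms(2,3) by (simp add: real_root_divide real_root_pos2)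
  finally show "jsr A m \<le> \<gamma> / root l (delta_fun (\<epsilon> * kappa P / 2) TYPE('n))" unfolding \<delta>_def .
qed

end
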